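(* Let $f(x)=x^5+px^4+qx^3+rx^2+sx+t$ with real coefficients and let $D$, $L_1$, $L_2$, $L_3$, $M_1$ be as in the context. Suppose $D=0$, $L_1=0$, $L_2=0$ and $L_3\neq0$. Then all roots of $f$ are real, and: if $M_1=0$, $f$ has one quadruple root and one simple root; if $M_1\neq 0$, $f$ has one triple root and one double root.
   Context: Let $\alpha_1,\dots,\alpha_5\in\mathbb{C}$ be the roots of $f$ listed with multiplicity. $D=\prod_{1\le i<j\le 5}(\alpha_i-\alpha_j)^2$ is the discriminant of $f$. $L_3=2p^2-5q$. $L_2=40qs-16p^2s-8rp^3+38rpq+3p^2q^2-12q^3-45r^2$. $L_1=-264ps^2r-12p^3tq^2+36r^3pq-124srpq^2+28srp^3q+260sptq-132p^2qrt+240pr^2t+234sqr^2+32p^4tr+48ptq^3-56sp^3t-80q^2rt+194qs^2p^2-600str-6q^3sp^2+2p^2q^2r^2-12sr^2p^2-54r^4+320s^3-8q^3r^2-8r^3p^3+250qt^2-176q^2s^2+24q^4s-36p^4s^2-100p^2t^2$. $M_1=8p^3r-80sp^2-3p^2q^2+10prq+200sq-75r^2$. *)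

theory Defs
  imports "HOL-Computational_Algebra.Polynomial" Complex_Main
begin

definition quintic :: "real \<Rightarrow> real \<Rightarrow> real \<Rightarrow> real \<Rightarrow> real \<Rightarrow> real poly" where
  "quintic p q r s t = [:t, s, r, q, p, 1:]"

text \<open>Discriminant in terms of the roots alpha 0, ..., alpha 4 (listed with multiplicity).\<close>
definition discr5 :: "(nat \<Rightarrow> complex) \<Rightarrow> complex" where
  "discr5 \<alpha> = (\<Prod>j<5. \<Prod>i<j. (\<alpha> i - \<alpha> j)^2)"

definition L3 :: "real \<Rightarrow> real \<Rightarrow> real" where
  "L3 p q = 2*p^2 - 5*q"

definition L2 :: "real \<Rightarrow> real \<Rightarrow> real \<Rightarrow> real \<Rightarrow> real" where
  "L2 p q r s = 40*q*s - 16*p^2*s - 8*r*p^3 + 38*r*p*q + 3*p^2*q^2 - 12*q^3 - 45*r^2"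

definition L1 :: "real \<Rightarrow> real \<Rightarrow> real \<Rightarrow> real \<Rightarrow> real \<Rightarrow> real" where
  "L1 p q r s t = -264*p*s^2*r - 12*p^3*t*q^2 + 36*r^3*p*q - 124*s*r*p*q^2 + 28*s*r*p^3*q
     + 260*s*p*t*q - 132*p^2*q*r*t + 240*p*r^2*t + 234*s*q*r^2 + 32*p^4*t*r + 48*p*t*q^3
     - 56*s*p^3*t - 80*q^2*r*t + 194*q*s^2*p^2 - 600*s*t*r - 6*q^3*s*p^2 + 2*p^2*q^2*r^2
     - 12*s*r^2*p^2 - 54*r^4 + 320*s^3 - 8*q^3*r^2 - 8*r^3*p^3 + 250*q*t^2 - 176*q^2*s^2
     + 24*q^4*s - 36*p^4*s^2 - 100*p^2*t^2"

definition M1 :: "real \<Rightarrow> real \<Rightarrow> real \<Rightarrow> real \<Rightarrow> real" where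
  "M1 p q r s = 8*p^3*r - 80*s*p^2 - 3*p^2*q^2 + 10*p*r*q + 200*s*q - 75*r^2"

end

theory Submission imports Defs begin

definition gL1 :: "'a::comm_ring_1 \<Rightarrow> 'a \<Rightarrow> 'a \<Rightarrow> 'a \<Rightarrow> 'a \<Rightarrow> 'a" where
  "gL1 p q r s t = -264*p*s^2*r - 12*p^3*t*q^2 + 36*r^3*p*q - 124*s*r*p*q^2 + 28*s*r*p^3*q
     + 260*s*p*t*q - 132*p^2*q*r*t + 240*p*r^2*t + 234*s*q*r^2 + 32*p^4*t*r + 48*p*t*q^3
     - 56*s*p^3*t - 80*q^2*r*t + 194*q*s^2*p^2 - 600*s*t*r - 6*q^3*s*p^2 + 2*p^2*q^2*r^2
     - 12*s*r^2*p^2 - 54*r^4 + 320*s^3 - 8*q^3*r^2 - 8*r^3*p^3 + 250*q*t^2 - 176*q^2*s^2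
     + 24*q^4*s - 36*p^4*s^2 - 100*p^2*t^2"

definition gL2 :: "'a::comm_ring_1 \<Rightarrow> 'a \<Rightarrow> 'a \<Rightarrow> 'a \<Rightarrow> 'a" where
  "gL2 p q r s = 40*q*s - 16*p^2*s - 8*r*p^3 + 38*r*p*q + 3*p^2*q^2 - 12*q^3 - 45*r^2"

definition gL3 :: "'a::comm_ring_1 \<Rightarrow> 'a \<Rightarrow> 'a" where
  "gL3 p q = 2*p^2 - 5*q"

definition gM1 :: "'a::comm_ring_1 \<Rightarrow> 'a \<Rightarrow> 'a \<Rightarrow> 'a \<Rightarrow> 'a" where
  "gM1 p q r s = 8*p^3*r - 80*s*p^2 - 3*p^2*q^2 + 10*p*r*q + 200*s*q - 75*r^2"

definition E1 :: "complex \<Rightarrow> complex \<Rightarrow> complex \<Rightarrow> complex \<Rightarrow> complex \<Rightarrow> complex" where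
  "E1 x0 x1 x2 x3 x4 = -(x0+x1+x2+x3+x4)"
definition E2 :: "complex \<Rightarrow> complex \<Rightarrow> complex \<Rightarrow> complex \<Rightarrow> complex \<Rightarrow> complex" where
  "E2 x0 x1 x2 x3 x4 = x0*x1+x0*x2+x0*x3+x0*x4+x1*x2+x1*x3+x1*x4+x2*x3+x2*x4+x3*x4"
definition E3 :: "complex \<Rightarrow> complex \<Rightarrow> complex \<Rightarrow> complex \<Rightarrow> complex \<Rightarrow> complex" where
  "E3 x0 x1 x2 x3 x4 = -(x0*x1*x2+x0*x1*x3+x0*x1*x4+x0*x2*x3+x0*x2*x4+x0*x3*x4+x1*x2*x3+x1*x2*x4+x1*x3*x4+x2*x3*x4)"
definition E4 :: "complex \<Rightarrow> complex \<Rightarrow> complex \<Rightarrow> complex \<Rightarrow> complex \<Rightarrow> complex" where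
  "E4 x0 x1 x2 x3 x4 = x0*x1*x2*x3+x0*x1*x2*x4+x0*x1*x3*x4+x0*x2*x3*x4+x1*x2*x3*x4"
definition E5 :: "complex \<Rightarrow> complex \<Rightarrow> complex \<Rightarrow> complex \<Rightarrow> complex \<Rightarrow> complex" where
  "E5 x0 x1 x2 x3 x4 = -(x0*x1*x2*x3*x4)"

lemmas E_defs = E1_def E2_def E3_def E4_def E5_def

lemma E_sw01: "E1 x1 x0 x2 x3 x4 = E1 x0 x1 x2 x3 x4" "E2 x1 x0 x2 x3 x4 = E2 x0 x1 x2 x3 x4"
  "E3 x1 x0 x2 x3 x4 = E3 x0 x1 x2 x3 x4" "E4 x1 x0 x2 x3 x4 = E4 x0 x1 x2 x3 x4"
  "E5 x1 x0 x2 x3 x4 = E5 x0 x1 x2 x3 x4"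
  unfolding E_defs by algebra+
lemma E_sw12: "E1 x0 x2 x1 x3 x4 = E1 x0 x1 x2 x3 x4" "E2 x0 x2 x1 x3 x4 = E2 x0 x1 x2 x3 x4"
  "E3 x0 x2 x1 x3 x4 = E3 x0 x1 x2 x3 x4" "E4 x0 x2 x1 x3 x4 = E4 x0 x1 x2 x3 x4"
  "E5 x0 x2 x1 x3 x4 = E5 x0 x1 x2 x3 x4"
  unfolding E_defs by algebra+
lemma E_sw23: "E1 x0 x1 x3 x2 x4 = E1 x0 x1 x2 x3 x4" "E2 x0 x1 x3 x2 x4 = E2 x0 x1 x2 x3 x4"
  "E3 x0 x1 x3 x2 x4 = E3 x0 x1 x2 x3 x4" "E4 x0 x1 x3 x2 x4 = E4 x0 x1 x2 x3 x4"
  "E5 x0 x1 x3 x2 x4 = E5 x0 x1 x2 x3 x4"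
  unfolding E_defs by algebra+
lemma E_sw34: "E1 x0 x1 x2 x4 x3 = E1 x0 x1 x2 x3 x4" "E2 x0 x1 x2 x4 x3 = E2 x0 x1 x2 x3 x4"
  "E3 x0 x1 x2 x4 x3 = E3 x0 x1 x2 x3 x4" "E4 x0 x1 x2 x4 x3 = E4 x0 x1 x2 x3 x4"
  "E5 x0 x1 x2 x4 x3 = E5 x0 x1 x2 x3 x4"
  unfolding E_defs by algebra+
lemmas E_sw = E_sw01 E_sw12 E_sw23 E_sw34

definition pat41 :: "complex \<Rightarrow> complex \<Rightarrow> complex \<Rightarrow> complex \<Rightarrow> complex \<Rightarrow> complex \<Rightarrow> complex \<Rightarrow> bool" where
  "pat41 P Q R S T a b \<longleftrightarrow> P = -(4*a+b) \<and> Q = 6*a^2+4*a*b \<and> R = -(4*a^3+6*a^2*b)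
     \<and> S = a^4+4*a^3*b \<and> T = -(a^4*b)"

definition pat32 :: "complex \<Rightarrow> complex \<Rightarrow> complex \<Rightarrow> complex \<Rightarrow> complex \<Rightarrow> complex \<Rightarrow> complex \<Rightarrow> bool" where
  "pat32 P Q R S T a b \<longleftrightarrow> P = -(3*a+2*b) \<and> Q = 3*a^2+6*a*b+b^2 \<and> R = -(a^3+6*a^2*b+3*a*b^2)
     \<and> S = 2*a^3*b+3*a^2*b^2 \<and> T = -(a^3*b^2)"

definition concl where
  "concl P Q R S T x0 x1 x2 x3 x4 \<longleftrightarrow> (\<exists>a b. a \<noteq> b \<and>
     (x0 = a \<or> x0 = b) \<and> (x1 = a \<or> x1 = b) \<and> (x2 = a \<or> x2 = b) \<and> (x3 = a \<or> x3 = b) \<and> (x4 = a \<or> x4 = b)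
     \<and> (pat41 P Q R S T a b \<or> pat32 P Q R S T a b))"

definition CC where
  "CC x0 x1 x2 x3 x4 = concl (E1 x0 x1 x2 x3 x4) (E2 x0 x1 x2 x3 x4) (E3 x0 x1 x2 x3 x4)
      (E4 x0 x1 x2 x3 x4) (E5 x0 x1 x2 x3 x4) x0 x1 x2 x3 x4"
definition l1 where "l1 x0 x1 x2 x3 x4 = gL1 (E1 x0 x1 x2 x3 x4) (E2 x0 x1 x2 x3 x4) (E3 x0 x1 x2 x3 x4)
      (E4 x0 x1 x2 x3 x4) (E5 x0 x1 x2 x3 x4)"
definition l2 where "l2 x0 x1 x2 x3 x4 = gL2 (E1 x0 x1 x2 x3 x4) (E2 x0 x1 x2 x3 x4) (E3 x0 x1 x2 x3 x4)
      (E4 x0 x1 x2 x3 x4)"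
definition l3 where "l3 x0 x1 x2 x3 x4 = gL3 (E1 x0 x1 x2 x3 x4) (E2 x0 x1 x2 x3 x4)"

lemma concl_sw:
  "concl P Q R S T x1 x0 x2 x3 x4 = concl P Q R S T x0 x1 x2 x3 x4"
  "concl P Q R S T x0 x2 x1 x3 x4 = concl P Q R S T x0 x1 x2 x3 x4"
  "concl P Q R S T x0 x1 x3 x2 x4 = concl P Q R S T x0 x1 x2 x3 x4"
  "concl P Q R S T x0 x1 x2 x4 x3 = concl P Q R S T x0 x1 x2 x3 x4"
  unfolding concl_def by blast+

lemma CC_sw:
  "CC x1 x0 x2 x3 x4 = CC x0 x1 x2 x3 x4"
  "CC x0 x2 x1 x3 x4 = CC x0 x1 x2 x3 x4"
  "CC x0 x1 x3 x2 x4 = CC x0 x1 x2 x3 x4"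
  "CC x0 x1 x2 x4 x3 = CC x0 x1 x2 x3 x4"
  by (simp only: CC_def E_sw concl_sw)+

lemma l_sw:
  "l1 x1 x0 x2 x3 x4 = l1 x0 x1 x2 x3 x4" "l1 x0 x2 x1 x3 x4 = l1 x0 x1 x2 x3 x4"
  "l1 x0 x1 x3 x2 x4 = l1 x0 x1 x2 x3 x4" "l1 x0 x1 x2 x4 x3 = l1 x0 x1 x2 x3 x4"
  "l2 x1 x0 x2 x3 x4 = l2 x0 x1 x2 x3 x4" "l2 x0 x2 x1 x3 x4 = l2 x0 x1 x2 x3 x4"
  "l2 x0 x1 x3 x2 x4 = l2 x0 x1 x2 x3 x4" "l2 x0 x1 x2 x4 x3 = l2 x0 x1 x2 x3 x4"
  "l3 x1 x0 x2 x3 x4 = l3 x0 x1 x2 x3 x4" "l3 x0 x2 x1 x3 x4 = l3 x0 x1 x2 x3 x4"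
  "l3 x0 x1 x3 x2 x4 = l3 x0 x1 x2 x3 x4" "l3 x0 x1 x2 x4 x3 = l3 x0 x1 x2 x3 x4"
  by (simp_all add: l1_def l2_def l3_def E_sw)

lemma core3:
  assumes l2: "l2 x0 x1 z z z = 0" and l3: "l3 x0 x1 z z z \<noteq> 0"
  shows "CC x0 x1 z z z"
proof -
  have "l2 x0 x1 z z z = 3*((x0-x1)*(x0-z)*(x1-z))^2"
    unfolding l2_def gL2_def E_defs by algebra
  with l2 have "x0 = x1 \<or> x0 = z \<or> x1 = z" by simp
  moreover
  { assume x: "x0 = x1"
    have "l3 x0 x1 z z z = 3*(z-x1)^2" unfolding x l3_def gL3_def E_defs by algebra
    with l3 have "z \<noteq> x1" by auto
    moreover have "pat32 (E1 x0 x1 z z z) (E2 x0 x1 z z z) (E3 x0 x1 z z z) (E4 x0 x1 z z z) (E5 x0 x1 z z z) z x1"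
      unfolding x pat32_def E_defs by (intro conjI; algebra)
    ultimately have ?thesis unfolding CC_def concl_def using x by blast }
  moreover
  { assume x: "x0 = z"
    have "l3 x0 x1 z z z = 2*(z-x1)^2" unfolding x l3_def gL3_def E_defs by algebra
    with l3 have "z \<noteq> x1" by auto
    moreover have "pat41 (E1 x0 x1 z z z) (E2 x0 x1 z z z) (E3 x0 x1 z z z) (E4 x0 x1 z z z) (E5 x0 x1 z z z) z x1"
      unfolding x pat41_def E_defs by (intro conjI; algebra)
    ultimately have ?thesis unfolding CC_def concl_def using x by blast }
  moreover
  { assume x: "x1 = z"
    have "l3 x0 x1 z z z = 2*(z-x0)^2" unfolding x l3_def gL3_def E_defs by algebra
    with l3 have "z \<noteq> x0" by auto
    moreover have "pat41 (E1 x0 x1 z z z) (E2 x0 x1 z z z) (E3 x0 x1 z z z) (E4 x0 x1 z z z) (E5 x0 x1 z z z) z x0"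
      unfolding x pat41_def E_defs by (intro conjI; algebra)
    ultimately have ?thesis unfolding CC_def concl_def using x by blast }
  ultimately show ?thesis by blast
qed

lemma core22:
  assumes l2: "l2 x y y z z = 0" and l3: "l3 x y y z z \<noteq> 0"
  shows "CC x y y z z"
proof -
  have "l2 x y y z z = 4*((x-y)*(x-z)*(y-z))^2"
    unfolding l2_def gL2_def E_defs by algebra
  with l2 have "x = y \<or> x = z \<or> y = z" by simp
  moreover
  { assume e: "x = y"
    have "l3 x y y z z = 3*(y-z)^2" unfolding e l3_def gL3_def E_defs by algebra
    with l3 have "y \<noteq> z" by auto
    moreover have "pat32 (E1 x y y z z) (E2 x y y z z) (E3 x y y z z) (E4 x y y z z) (E5 x y y z z) y z"
      unfolding e pat32_def E_defs by (intro conjI; algebra)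
    ultimately have ?thesis unfolding CC_def concl_def using e by blast }
  moreover
  { assume e: "x = z"
    have "l3 x y y z z = 3*(z-y)^2" unfolding e l3_def gL3_def E_defs by algebra
    with l3 have "z \<noteq> y" by auto
    moreover have "pat32 (E1 x y y z z) (E2 x y y z z) (E3 x y y z z) (E4 x y y z z) (E5 x y y z z) z y"
      unfolding e pat32_def E_defs by (intro conjI; algebra)
    ultimately have ?thesis unfolding CC_def concl_def using e by blast }
  moreover
  { assume e: "y = z"
    have "l3 x y y z z = 2*(z-x)^2" unfolding e l3_def gL3_def E_defs by algebra
    with l3 have "z \<noteq> x" by auto
    moreover have "pat41 (E1 x y y z z) (E2 x y y z z) (E3 x y y z z) (E4 x y y z z) (E5 x y y z z) z x"
      unfolding e pat41_def E_defs by (intro conjI; algebra)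
    ultimately have ?thesis unfolding CC_def concl_def using e by blast }
  ultimately show ?thesis by blast
qed


lemma l1_id: "l1 x0 x1 x2 x3 x3 = 2*((x0-x1)*(x0-x2)*(x0-x3)*(x1-x2)*(x1-x3)*(x2-x3))^2"
  unfolding l1_def gL1_def E_defs by algebra

lemma core1:
  assumes a1: "l1 x0 x1 x2 x3 x3 = 0" and a2: "l2 x0 x1 x2 x3 x3 = 0" and a3: "l3 x0 x1 x2 x3 x3 \<noteq> 0"
  shows "CC x0 x1 x2 x3 x3"
proof -
  from a1 have "x0 = x1 \<or> x0 = x2 \<or> x0 = x3 \<or> x1 = x2 \<or> x1 = x3 \<or> x2 = x3"
    unfolding l1_id by simp
  moreover
  { assume x: "x0 = x1"
    have "CC x2 x1 x1 x3 x3" by (rule core22) (use a2 a3 x in \<open>simp add: l_sw\<close>)+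
    then have ?thesis using x by (simp add: CC_sw) }
  moreover
  { assume x: "x0 = x2"
    have "CC x1 x2 x2 x3 x3" by (rule core22) (use a2 a3 x in \<open>simp add: l_sw\<close>)+
    then have ?thesis using x by (simp add: CC_sw) }
  moreover
  { assume x: "x1 = x2"
    have "CC x0 x2 x2 x3 x3" by (rule core22) (use a2 a3 x in \<open>simp add: l_sw\<close>)+
    then have ?thesis using x by (simp add: CC_sw) }
  moreover
  { assume x: "x0 = x3"
    have "CC x1 x2 x3 x3 x3" by (rule core3) (use a2 a3 x in \<open>simp add: l_sw\<close>)+
    then have ?thesis using x by (simp add: CC_sw) }
  moreover
  { assume x: "x1 = x3"
    have "CC x0 x2 x3 x3 x3" by (rule core3) (use a2 a3 x in \<open>simp add: l_sw\<close>)+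
    then have ?thesis using x by (simp add: CC_sw) }
  moreover
  { assume x: "x2 = x3"
    have "CC x0 x1 x3 x3 x3" by (rule core3) (use a2 a3 x in \<open>simp add: l_sw\<close>)+
    then have ?thesis using x by (simp add: CC_sw) }
  ultimately show ?thesis by blast
qed

lemma core0:
  assumes a1: "l1 x0 x1 x2 x3 x4 = 0" and a2: "l2 x0 x1 x2 x3 x4 = 0" and a3: "l3 x0 x1 x2 x3 x4 \<noteq> 0"
    and d: "x0 = x1 \<or> x0 = x2 \<or> x0 = x3 \<or> x0 = x4 \<or> x1 = x2 \<or> x1 = x3 \<or> x1 = x4
       \<or> x2 = x3 \<or> x2 = x4 \<or> x3 = x4"
  shows "CC x0 x1 x2 x3 x4"
proof -
  have A: "CC a b c d d"
    if "l1 a b c d d = 0" "l2 a b c d d = 0" "l3 a b c d d \<noteq> 0" for a b c d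
    using core1 that by blast
  have C01: ?thesis if x: "x0 = x1"
  proof -
    have "CC x2 x3 x4 x0 x0" by (rule A) (use a1 a2 a3 x in \<open>simp add: l_sw\<close>)+
    then show ?thesis using x by (simp add: CC_sw)
  qed
  have C02: ?thesis if x: "x0 = x2"
  proof -
    have "CC x1 x3 x4 x0 x0" by (rule A) (use a1 a2 a3 x in \<open>simp add: l_sw\<close>)+
    then show ?thesis using x by (simp add: CC_sw)
  qed
  have C03: ?thesis if x: "x0 = x3"
  proof -
    have "CC x1 x2 x4 x0 x0" by (rule A) (use a1 a2 a3 x in \<open>simp add: l_sw\<close>)+
    then show ?thesis using x by (simp add: CC_sw)
  qed
  have C04: ?thesis if x: "x0 = x4"
  proof -
    have "CC x1 x2 x3 x0 x0" by (rule A) (use a1 a2 a3 x in \<open>simp add: l_sw\<close>)+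
    then show ?thesis using x by (simp add: CC_sw)
  qed
  have C12: ?thesis if x: "x1 = x2"
  proof -
    have "CC x0 x3 x4 x1 x1" by (rule A) (use a1 a2 a3 x in \<open>simp add: l_sw\<close>)+
    then show ?thesis using x by (simp add: CC_sw)
  qed
  have C13: ?thesis if x: "x1 = x3"
  proof -
    have "CC x0 x2 x4 x1 x1" by (rule A) (use a1 a2 a3 x in \<open>simp add: l_sw\<close>)+
    then show ?thesis using x by (simp add: CC_sw)
  qed
  have C14: ?thesis if x: "x1 = x4"
  proof -
    have "CC x0 x2 x3 x1 x1" by (rule A) (use a1 a2 a3 x in \<open>simp add: l_sw\<close>)+
    then show ?thesis using x by (simp add: CC_sw)
  qed
  have C23: ?thesis if x: "x2 = x3"
  proof -
    have "CC x0 x1 x4 x2 x2" by (rule A) (use a1 a2 a3 x in \<open>simp add: l_sw\<close>)+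
    then show ?thesis using x by (simp add: CC_sw)
  qed
  have C24: ?thesis if x: "x2 = x4"
  proof -
    have "CC x0 x1 x3 x2 x2" by (rule A) (use a1 a2 a3 x in \<open>simp add: l_sw\<close>)+
    then show ?thesis using x by (simp add: CC_sw)
  qed
  have C34: ?thesis if x: "x3 = x4"
  proof -
    have "CC x0 x1 x2 x3 x3" by (rule A) (use a1 a2 a3 x in \<open>simp add: l_sw\<close>)+
    then show ?thesis using x by (simp add: CC_sw)
  qed
  show ?thesis using d C01 C02 C03 C04 C12 C13 C14 C23 C24 C34 by blast
qed


lemma fin41:
  fixes p q r s t a' b' :: real
  assumes pat: "pat41 (of_real p) (of_real q) (of_real r) (of_real s) (of_real t) a b"
    and nz: "L3 p q \<noteq> 0" and ab: "a \<noteq> b"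
  shows "\<exists>a' b'. a = of_real a' \<and> b = of_real b' \<and> a' \<noteq> b' \<and>
     quintic p q r s t = [:-a',1:]^4*[:-b',1:] \<and> M1 p q r s = 0"
proof -
  have eP: "complex_of_real p = -(4*a+b)" and eQ: "complex_of_real q = 6*a^2+4*a*b"
    and eR: "complex_of_real r = -(4*a^3+6*a^2*b)" and eS: "complex_of_real s = a^4+4*a^3*b"
    and eT: "complex_of_real t = -(a^4*b)" using pat unfolding pat41_def by auto
  have L3c: "complex_of_real (L3 p q) = 2*(of_real p)^2 - 5*of_real q" by (simp add: L3_def)
  have "2*a*complex_of_real (L3 p q) = 5*of_real r - of_real p * of_real q"
    unfolding L3c eP eQ eR by algebra
  also have "\<dots> = of_real (5*r - p*q)" by simp
  finally have ea: "2*a*complex_of_real (L3 p q) = of_real (5*r - p*q)" .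
  have Lnz: "complex_of_real (L3 p q) \<noteq> 0" using nz by simp
  have "a = (2*a*complex_of_real (L3 p q)) / (2*complex_of_real (L3 p q))" using Lnz by simp
  also have "\<dots> = of_real ((5*r - p*q)/(2*L3 p q))" unfolding ea by simp
  finally have "a = of_real ((5*r - p*q)/(2*L3 p q))" .
  then obtain a' where a': "a = of_real a'" by blast
  have "b = of_real (-p - 4*a')" using eP a' by simp
  then obtain b' where b': "b = of_real b'" by blast
  have ne: "a' \<noteq> b'" using ab a' b' by simp
  have "complex_of_real p = of_real (-(4*a'+b'))" using eP unfolding a' b' by simp
  then have p: "p = -(4*a'+b')" by (simp only: of_real_eq_iff)
  have "complex_of_real q = of_real (6*a'^2+4*a'*b')" using eQ unfolding a' b' by simp
  then have q: "q = 6*a'^2+4*a'*b'" by (simp only: of_real_eq_iff)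
  have "complex_of_real r = of_real (-(4*a'^3+6*a'^2*b'))" using eR unfolding a' b' by simp
  then have r: "r = -(4*a'^3+6*a'^2*b')" by (simp only: of_real_eq_iff)
  have "complex_of_real s = of_real (a'^4+4*a'^3*b')" using eS unfolding a' b' by simp
  then have s: "s = a'^4+4*a'^3*b'" by (simp only: of_real_eq_iff)
  have "complex_of_real t = of_real (-(a'^4*b'))" using eT unfolding a' b' by simp
  then have t: "t = -(a'^4*b')" by (simp only: of_real_eq_iff)
  have "quintic p q r s t = [:-a',1:]^4*[:-b',1:]"
    unfolding quintic_def p q r s t by (simp add: eval_nat_numeral algebra_simps)
  moreover have "M1 p q r s = 0" unfolding M1_def p q r s by algebra
  ultimately show ?thesis using a' b' ne by blast
qed

lemma fin32:
  fixes p q r s t a' b' :: real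
  assumes pat: "pat32 (of_real p) (of_real q) (of_real r) (of_real s) (of_real t) a b"
    and nz: "L3 p q \<noteq> 0" and ab: "a \<noteq> b"
  shows "\<exists>a' b'. a = of_real a' \<and> b = of_real b' \<and> a' \<noteq> b' \<and>
     quintic p q r s t = [:-a',1:]^3*[:-b',1:]^2 \<and> M1 p q r s \<noteq> 0"
proof -
  have eP: "complex_of_real p = -(3*a+2*b)" and eQ: "complex_of_real q = 3*a^2+6*a*b+b^2"
    and eR: "complex_of_real r = -(a^3+6*a^2*b+3*a*b^2)" and eS: "complex_of_real s = 2*a^3*b+3*a^2*b^2"
    and eT: "complex_of_real t = -(a^3*b^2)" using pat unfolding pat32_def by auto
  have L3c: "complex_of_real (L3 p q) = 2*(of_real p)^2 - 5*of_real q" by (simp add: L3_def)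
  have "a*complex_of_real (L3 p q) = 2*(of_real p)^3 - 8*of_real p * of_real q + 15*of_real r"
    unfolding L3c eP eQ eR by algebra
  also have "\<dots> = of_real (2*p^3 - 8*p*q + 15*r)" by simp
  finally have ea: "a*complex_of_real (L3 p q) = of_real (2*p^3 - 8*p*q + 15*r)" .
  have Lnz: "complex_of_real (L3 p q) \<noteq> 0" using nz by simp
  have "a = (a*complex_of_real (L3 p q)) / (complex_of_real (L3 p q))" using Lnz by simp
  also have "\<dots> = of_real ((2*p^3 - 8*p*q + 15*r)/(L3 p q))" unfolding ea by simp
  finally have "a = of_real ((2*p^3 - 8*p*q + 15*r)/(L3 p q))" .
  then obtain a' where a': "a = of_real a'" by blast
  have "2*b = of_real (-p - 3*a')" using eP a' by simp
  then have "b = of_real ((-p - 3*a')/2)" by (metis nonzero_mult_div_cancel_left of_real_divide of_real_numeral zero_neq_numeral)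
  then obtain b' where b': "b = of_real b'" by blast
  have ne: "a' \<noteq> b'" using ab a' b' by simp
  have "complex_of_real p = of_real (-(3*a'+2*b'))" using eP unfolding a' b' by simp
  then have p: "p = -(3*a'+2*b')" by (simp only: of_real_eq_iff)
  have "complex_of_real q = of_real (3*a'^2+6*a'*b'+b'^2)" using eQ unfolding a' b' by simp
  then have q: "q = 3*a'^2+6*a'*b'+b'^2" by (simp only: of_real_eq_iff)
  have "complex_of_real r = of_real (-(a'^3+6*a'^2*b'+3*a'*b'^2))" using eR unfolding a' b' by simp
  then have r: "r = -(a'^3+6*a'^2*b'+3*a'*b'^2)" by (simp only: of_real_eq_iff)
  have "complex_of_real s = of_real (2*a'^3*b'+3*a'^2*b'^2)" using eS unfolding a' b' by simp
  then have s: "s = 2*a'^3*b'+3*a'^2*b'^2" by (simp only: of_real_eq_iff)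
  have "complex_of_real t = of_real (-(a'^3*b'^2))" using eT unfolding a' b' by simp
  then have t: "t = -(a'^3*b'^2)" by (simp only: of_real_eq_iff)
  have "quintic p q r s t = [:-a',1:]^3*[:-b',1:]^2"
    unfolding quintic_def p q r s t by (simp add: eval_nat_numeral algebra_simps)
  moreover have "M1 p q r s = -12*(a'-b')^6" unfolding M1_def p q r s by algebra
  then have "M1 p q r s \<noteq> 0" using ne by simp
  ultimately show ?thesis using a' b' ne by blast
qed


theorem mainTheorem4:
  fixes p q r s t :: real and \<alpha> :: "nat \<Rightarrow> complex"
  assumes roots: "map_poly complex_of_real (quintic p q r s t) = (\<Prod>i<5. [:- \<alpha> i, 1:])"
    and D0: "discr5 \<alpha> = 0"
    and L10: "L1 p q r s t = 0"
    and L20: "L2 p q r s = 0"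
    and L3nz: "L3 p q \<noteq> 0"
  shows "(\<forall>i<5. \<alpha> i \<in> \<real>)
    \<and> (M1 p q r s = 0 \<longrightarrow>
         (\<exists>a b :: real. a \<noteq> b \<and> quintic p q r s t = [:-a, 1:]^4 * [:-b, 1:]))
    \<and> (M1 p q r s \<noteq> 0 \<longrightarrow>
         (\<exists>a b :: real. a \<noteq> b \<and> quintic p q r s t = [:-a, 1:]^3 * [:-b, 1:]^2))"
proof -
  define x0 x1 x2 x3 x4 where "x0 = \<alpha> 0" "x1 = \<alpha> 1" "x2 = \<alpha> 2" "x3 = \<alpha> 3" "x4 = \<alpha> 4"
  have prod: "(\<Prod>i<5. [:- \<alpha> i, 1:]) = [:E5 x0 x1 x2 x3 x4, E4 x0 x1 x2 x3 x4, E3 x0 x1 x2 x3 x4,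
      E2 x0 x1 x2 x3 x4, E1 x0 x1 x2 x3 x4, 1:]"
    unfolding x0_x1_x2_x3_x4_def E_defs by (simp add: eval_nat_numeral algebra_simps)
  have mp: "map_poly complex_of_real (quintic p q r s t) = [:of_real t, of_real s, of_real r, of_real q, of_real p, 1:]"
    by (simp add: quintic_def map_poly_pCons)
  from roots[unfolded prod mp]
  have eP: "complex_of_real p = E1 x0 x1 x2 x3 x4" and eQ: "complex_of_real q = E2 x0 x1 x2 x3 x4"
    and eR: "complex_of_real r = E3 x0 x1 x2 x3 x4" and eS: "complex_of_real s = E4 x0 x1 x2 x3 x4"
    and eT: "complex_of_real t = E5 x0 x1 x2 x3 x4" by simp_all
  have "l1 x0 x1 x2 x3 x4 = of_real (L1 p q r s t)"
    unfolding l1_def eP[symmetric] eQ[symmetric] eR[symmetric] eS[symmetric] eT[symmetric]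
    by (simp add: gL1_def L1_def)
  then have a1: "l1 x0 x1 x2 x3 x4 = 0" using L10 by simp
  have "l2 x0 x1 x2 x3 x4 = of_real (L2 p q r s)"
    unfolding l2_def eP[symmetric] eQ[symmetric] eR[symmetric] eS[symmetric]
    by (simp add: gL2_def L2_def)
  then have a2: "l2 x0 x1 x2 x3 x4 = 0" using L20 by simp
  have "l3 x0 x1 x2 x3 x4 = of_real (L3 p q)"
    unfolding l3_def eP[symmetric] eQ[symmetric]
    by (simp add: gL3_def L3_def)
  then have a3: "l3 x0 x1 x2 x3 x4 \<noteq> 0" using L3nz by simp
  have d: "x0 = x1 \<or> x0 = x2 \<or> x0 = x3 \<or> x0 = x4 \<or> x1 = x2 \<or> x1 = x3 \<or> x1 = x4
       \<or> x2 = x3 \<or> x2 = x4 \<or> x3 = x4"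
    using D0 unfolding discr5_def x0_x1_x2_x3_x4_def by (simp add: eval_nat_numeral) (metis)
  have "CC x0 x1 x2 x3 x4" using core0[OF a1 a2 a3 d] .
  then obtain a b where ab: "a \<noteq> b" and mem: "(x0 = a \<or> x0 = b) \<and> (x1 = a \<or> x1 = b) \<and>
      (x2 = a \<or> x2 = b) \<and> (x3 = a \<or> x3 = b) \<and> (x4 = a \<or> x4 = b)"
    and pat: "pat41 (of_real p) (of_real q) (of_real r) (of_real s) (of_real t) a b
       \<or> pat32 (of_real p) (of_real q) (of_real r) (of_real s) (of_real t) a b"
    unfolding CC_def concl_def eP[symmetric] eQ[symmetric] eR[symmetric] eS[symmetric] eT[symmetric]
    by blast
  have allx: "\<forall>i<5. \<alpha> i \<in> {x0,x1,x2,x3,x4}"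
    unfolding x0_x1_x2_x3_x4_def by (auto simp: less_Suc_eq numeral_eq_Suc)
  show ?thesis
  proof (cases "pat41 (of_real p) (of_real q) (of_real r) (of_real s) (of_real t) a b")
    case True
    from fin41[OF True L3nz ab] obtain a' b' where
      A: "a = of_real a'" "b = of_real b'" "a' \<noteq> b'" "quintic p q r s t = [:-a',1:]^4*[:-b',1:]"
         "M1 p q r s = 0" by blast
    have "\<forall>i<5. \<alpha> i \<in> \<real>" using allx mem A(1,2) by auto
    then show ?thesis using A by blast
  next
    case False
    with pat have P: "pat32 (of_real p) (of_real q) (of_real r) (of_real s) (of_real t) a b" by blast
    from fin32[OF P L3nz ab] obtain a' b' where
      A: "a = of_real a'" "b = of_real b'" "a' \<noteq> b'" "quintic p q r s t = [:-a',1:]^3*[:-b',1:]^2"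
         "M1 p q r s \<noteq> 0" by blast
    have "\<forall>i<5. \<alpha> i \<in> \<real>" using allx mem A(1,2) by auto
    then show ?thesis using A by blast
  qed
qed

end
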